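(* Let $a,b$ be integers with $0<b<a$, let $S=\langle a,a+1,\ldots,a+b\rangle$ with conductor $c$, and let $m\ge 2c-1$. Let $q$ be a positive integer with $qb<a$. Then $\mathrm D(m+qa+qb)\cap[m,\infty)$ is an ordered amenable set (that is, an ordered $(S,m,r)$-amenable set, where $r$ is its cardinality).
   Context: For $x\in S$, $\mathrm D(x)=\{\alpha\in S\mid x-\alpha\in S\}$. A set $M=\{m_1<\cdots<m_r\}\subseteq S$ with $2c-1\le m=m_1$ is $(S,m,r)$-amenable if $\mathrm D(m_i)\cap[m,\infty)\subseteq M$ for all $i$. The ground is $\{m,m+1,\ldots,m+a+b-1\}$, and the shadow of $M$ is $M\cap\{m,\ldots,m+a+b-1\}$. For a finite $M\subseteq S\cap[m,\infty)$, let $J$ be the set of $j\in\{0,\ldots,a-1\}$ such that $x-(m+b)=qa+j$ for some $x\in M$ and some integer $q\ge 0$; if $J\neq\emptyset$ let $j_0=\max J$ and let the wagon of $M$ be $W=\{x\in M\mid x-(m+b)=qa+j_0\text{ for some integer }q\}$. An element $P\in M$ is the pivot of $M$ if either $P<m+b$ and $P=\max M$, or $P=\max W$. An $(S,m,r)$-amenable set $M$ with pivot $P$ is ordered amenable if (i) its shadow is $\{m,m+1,\ldots,m+t\}$ for some integer $0\le t<a+b-1$, and (ii) whenever $s\in S\setminus M$ is such that $M\cup\{s\}$ is $(S,m,r+1)$-amenable with the same shadow as $M$, we have $s=P+a$. *)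

theory Defs
  imports Main
begin

inductive_set nsg :: "nat \<Rightarrow> nat \<Rightarrow> nat set" for a b :: nat where
  zero: "0 \<in> nsg a b"
| step: "x \<in> nsg a b \<Longrightarrow> g \<in> {a..a+b} \<Longrightarrow> x + g \<in> nsg a b"

definition conductor :: "nat set \<Rightarrow> nat" where
  "conductor S = (LEAST c. \<forall>n\<ge>c. n \<in> S)"

definition Dset :: "nat set \<Rightarrow> nat \<Rightarrow> nat set" where
  "Dset S x = {\<alpha> \<in> S. \<alpha> \<le> x \<and> x - \<alpha> \<in> S}"

definition amenable :: "nat set \<Rightarrow> nat \<Rightarrow> nat \<Rightarrow> nat set \<Rightarrow> bool" where
  "amenable S m r M \<longleftrightarrow>
     finite M \<and> M \<noteq> {} \<and> card M = r \<and> M \<subseteq> S \<and> Min M = m \<and>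
     2 * conductor S - 1 \<le> m \<and>
     (\<forall>x\<in>M. Dset S x \<inter> {m..} \<subseteq> M)"

definition shadow :: "nat \<Rightarrow> nat \<Rightarrow> nat \<Rightarrow> nat set \<Rightarrow> nat set" where
  "shadow a b m M = M \<inter> {m..<m+a+b}"

definition Jset :: "nat \<Rightarrow> nat \<Rightarrow> nat \<Rightarrow> nat set \<Rightarrow> nat set" where
  "Jset a b m M = {j. j < a \<and> (\<exists>x\<in>M. \<exists>q::int. q \<ge> 0 \<and>
       int x - int (m + b) = q * int a + int j)}"

definition wagon :: "nat \<Rightarrow> nat \<Rightarrow> nat \<Rightarrow> nat set \<Rightarrow> nat set" where
  "wagon a b m M = {x \<in> M. \<exists>q::int. int x - int (m + b) = q * int a + int (Max (Jset a b m M))}"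

definition is_pivot :: "nat \<Rightarrow> nat \<Rightarrow> nat \<Rightarrow> nat set \<Rightarrow> nat \<Rightarrow> bool" where
  "is_pivot a b m M P \<longleftrightarrow> P \<in> M \<and>
     ((P < m + b \<and> P = Max M) \<or>
      (Jset a b m M \<noteq> {} \<and> P = Max (wagon a b m M)))"

definition ordered_amenable :: "nat \<Rightarrow> nat \<Rightarrow> nat \<Rightarrow> nat \<Rightarrow> nat set \<Rightarrow> bool" where
  "ordered_amenable a b m r M \<longleftrightarrow>
     amenable (nsg a b) m r M \<and>
     (\<exists>P. is_pivot a b m M P \<and>
        (\<exists>t. t < a + b - 1 \<and> shadow a b m M = {m..m+t}) \<and>
        (\<forall>s\<in>nsg a b - M.
            amenable (nsg a b) m (r + 1) (M \<union> {s}) \<and>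
            shadow a b m (M \<union> {s}) = shadow a b m M \<longrightarrow> s = P + a))"

end

theory Submission
  imports Defs
begin
lemma nsg_iff: "n \<in> nsg a b \<longleftrightarrow> (\<exists>k. k*a \<le> n \<and> n \<le> k*(a+b))"
proof
  assume "n \<in> nsg a b"
  then show "\<exists>k. k*a \<le> n \<and> n \<le> k*(a+b)"
  proof induction
    case zero then show ?case by auto
  next
    case (step x g)
    then obtain k where "k*a \<le> x" "x \<le> k*(a+b)" by auto
    with \<open>g \<in> {a..a+b}\<close> show ?case by (intro exI[of _ "Suc k"]) auto
  qed
next
  assume "\<exists>k. k*a \<le> n \<and> n \<le> k*(a+b)"
  then obtain k where "k*a \<le> n" "n \<le> k*(a+b)" by auto
  then show "n \<in> nsg a b"
  proof (induction k arbitrary: n)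
    case 0 then show ?case by (auto intro: nsg.zero)
  next
    case (Suc k)
    define g where "g = min (a+b) (n - k*a)"
    have "n - g \<in> nsg a b"
      using Suc.prems by (intro Suc.IH) (auto simp: g_def min_def algebra_simps)
    moreover have "g \<in> {a..a+b}" using Suc.prems by (auto simp: g_def min_def algebra_simps)
    ultimately have "n - g + g \<in> nsg a b" by (rule nsg.step)
    moreover have "g \<le> n" using Suc.prems by (auto simp: g_def min_def algebra_simps)
    ultimately show ?case by simp
  qed
qed

lemma nsg_add: "x \<in> nsg a b \<Longrightarrow> y \<in> nsg a b \<Longrightarrow> x + y \<in> nsg a b"
  unfolding nsg_iff
proof -
  assume "\<exists>k. k*a \<le> x \<and> x \<le> k*(a+b)" "\<exists>k. k*a \<le> y \<and> y \<le> k*(a+b)"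
  then obtain k l where "k*a \<le> x" "x \<le> k*(a+b)" "l*a \<le> y" "y \<le> l*(a+b)" by blast
  then show "\<exists>k. k*a \<le> x + y \<and> x + y \<le> k*(a+b)"
    by (intro exI[of _ "k+l"]) (simp add: add_mult_distrib)
qed

lemma k_le_q:
  fixes k q a b :: nat
  assumes "k*a \<le> n" "n \<le> q*(a+b)" "q*b < a"
  shows "k \<le> q"
proof (rule ccontr)
  assume "\<not> k \<le> q"
  then have "Suc q * a \<le> k * a" by (intro mult_le_mono1) simp
  then show False using assms by (simp add: algebra_simps)
qed

lemma conductor_prop:
  assumes "0 < b" "b < a"
  shows "\<forall>n\<ge>conductor (nsg a b). n \<in> nsg a b" and "conductor (nsg a b) \<ge> 1"
proof -
  have ex: "\<forall>n\<ge>a*a. n \<in> nsg a b"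
  proof (intro allI impI)
    fix n assume n: "a*a \<le> n"
    define k where "k = n div a"
    have "k * a \<le> n" by (simp add: k_def)
    moreover have "n < k*a + a" using assms by (simp add: k_def) (metis add.commute div_mult_mod_eq mod_less_divisor mult.commute nat_add_left_cancel_less gr_zeroI less_nat_zero_code)
    moreover have "a \<le> k" using n assms unfolding k_def
      by (metis div_le_mono nonzero_mult_div_cancel_right not_gr_zero less_nat_zero_code)
    hence "a * 1 \<le> k * b" using assms by (intro mult_le_mono) auto
    ultimately show "n \<in> nsg a b" unfolding nsg_iff
      by (intro exI[of _ k]) (auto simp: algebra_simps)
  qed
  show "\<forall>n\<ge>conductor (nsg a b). n \<in> nsg a b"
    unfolding conductor_def by (rule LeastI[of _ "a*a"]) (rule ex)
  show "conductor (nsg a b) \<ge> 1"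
  proof (rule ccontr)
    assume "\<not> ?thesis"
    hence "conductor (nsg a b) = 0" by simp
    hence "1 \<in> nsg a b" using \<open>\<forall>n\<ge>conductor (nsg a b). n \<in> nsg a b\<close> by auto
    then obtain k where "k*a \<le> 1" "1 \<le> k*(a+b)" unfolding nsg_iff by blast
    then show False using assms
      by (cases k) auto
  qed
qed


lemma mod_helper:
  fixes Q R j :: int and a :: nat
  assumes "Q * int a + j = R" "0 \<le> j" "j < int a" "R = Q' * int a + r" "0 \<le> r" "r < int a"
  shows "j = r"
proof -
  have "R mod int a = j" unfolding assms(1)[symmetric] using assms(2,3) by simp
  moreover have "R mod int a = r" unfolding assms(4) using assms(5,6) by simp
  ultimately show ?thesis by simp
qed

theorem lemma4p14:
  fixes a b m q :: nat
  assumes "0 < b" and "b < a"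
    and "2 * conductor (nsg a b) - 1 \<le> m"
    and "0 < q" and "q * b < a"
  shows "ordered_amenable a b m
           (card (Dset (nsg a b) (m + q * a + q * b) \<inter> {m..}))
           (Dset (nsg a b) (m + q * a + q * b) \<inter> {m..})"
proof -
  define S where "S = nsg a b"
  define x where "x = m + q * a + q * b"
  define M where "M = Dset S x \<inter> {m..}"
  have cS: "\<And>n. n \<ge> m \<Longrightarrow> n \<in> S"
    using conductor_prop[OF assms(1,2)] assms(3) unfolding S_def by force
  have memM: "\<And>z. z \<in> M \<longleftrightarrow> m \<le> z \<and> z \<le> x \<and> x - z \<in> S"
    unfolding M_def Dset_def using cS by auto
  have xm: "x - m = q*(a+b)" by (simp add: x_def algebra_simps)
  have qS: "q*(a+b) \<in> S" unfolding S_def nsg_iff by (rule exI[of _ q]) (simp add: algebra_simps)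
  have mM: "m \<in> M" using memM xm qS by (simp add: x_def)
  have xM: "x \<in> M" using memM by (simp add: x_def S_def nsg.zero)
  have finM: "finite M" by (rule finite_subset[of _ "{..x}"]) (auto simp: memM)
  have MinM: "Min M = m" using mM finM by (intro Min_eqI) (auto simp: memM)
  have MaxM: "Max M = x" using xM finM by (intro Max_eqI) (auto simp: memM)
  have am: "amenable S m (card M) M"
    unfolding amenable_def
  proof (intro conjI)
    show "finite M" "M \<noteq> {}" "card M = card M" "Min M = m" using finM mM MinM by auto
    show "M \<subseteq> S" using memM cS by auto
    show "2 * conductor S - 1 \<le> m" using assms(3) by (simp add: S_def)
    show "\<forall>y\<in>M. Dset S y \<inter> {m..} \<subseteq> M"
    proof (intro ballI subsetI)
      fix y z assume y: "y \<in> M" and z: "z \<in> Dset S y \<inter> {m..}"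
      have "x - z = (x - y) + (y - z)" using y z memM by (auto simp: Dset_def)
      moreover have "x - y \<in> S" "y - z \<in> S" using y z memM by (auto simp: Dset_def)
      ultimately have "x - z \<in> S" unfolding S_def using nsg_add by (metis S_def)
      then show "z \<in> M" using y z memM by (auto simp: Dset_def)
    qed
  qed
  have Mdesc: "\<And>z. z \<in> M \<Longrightarrow> \<exists>k e. k \<le> q \<and> e \<le> k*b \<and> x - z = k*a + e \<and> m \<le> z \<and> z \<le> x"
  proof -
    fix z assume z: "z \<in> M"
    then have "x - z \<in> S" "m \<le> z" "z \<le> x" using memM by auto
    then obtain k where k: "k*a \<le> x - z" "x - z \<le> k*(a+b)" unfolding S_def nsg_iff by auto
    have "k \<le> q" using k_le_q[OF k(1) _ assms(5)] xm \<open>m \<le> z\<close> by simp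
    then show "\<exists>k e. k \<le> q \<and> e \<le> k*b \<and> x - z = k*a + e \<and> m \<le> z \<and> z \<le> x"
      using k \<open>m \<le> z\<close> \<open>z \<le> x\<close>
      by (intro exI[of _ k] exI[of _ "x - z - k*a"]) (auto simp: algebra_simps)
  qed
  define j0 where "j0 = (q-1)*b"
  have "(q-1)*b \<le> q*b" by (intro mult_le_mono1) simp
  hence j0a: "j0 < a" using assms(5) unfolding j0_def by linarith
  have xdec: "x = (m+b) + q*a + j0"
  proof -
    have "(q-1)*b + b = q*b" using assms(4) by (cases q) auto
    thus ?thesis unfolding x_def j0_def by simp
  qed
  have xeq: "int x - int (m+b) = int q * int a + int j0" using xdec by simp
  have J0: "j0 \<in> Jset a b m M"
  proof -
    have "int q \<ge> 0" by simp
    thus ?thesis unfolding Jset_def using xM j0a xeq by blast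
  qed
  have Jle: "\<And>j. j \<in> Jset a b m M \<Longrightarrow> j \<le> j0"
  proof -
    fix j assume "j \<in> Jset a b m M"
    then obtain z Q where z: "z \<in> M" and ja: "j < a" and Q: "Q \<ge> 0"
      and eq: "int z - int (m + b) = Q * int a + int j" unfolding Jset_def by auto
    obtain k e where ke: "k \<le> q" "e \<le> k*b" "x - z = k*a + e" "m \<le> z" "z \<le> x"
      using Mdesc[OF z] by blast
    have zi: "int z = int x - int k * int a - int e"
    proof -
      have "int (x - z) = int k * int a + int e" using ke(3) by simp
      thus ?thesis using ke(5) by (simp add: of_nat_diff)
    qed
    have qk: "int (q-k) = int q - int k" using ke(1) by simp
    have "int (q-k) * int a = int q * int a - int k * int a" unfolding qk by (simp add: left_diff_distrib)
    hence eq2: "int z - int (m + b) = int (q - k) * int a + (int j0 - int e)"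
      using zi xeq by linarith
    show "j \<le> j0"
    proof (cases "k < q")
      case True
      have "k*b \<le> (q-1)*b" using True by (intro mult_le_mono1) simp
      hence "e \<le> j0" using ke(2) unfolding j0_def by linarith
      hence r0: "0 \<le> int j0 - int e" by simp
      have lt1: "int j < int a" using ja by simp
      have lt2: "int j0 - int e < int a" using j0a by simp
      have "int j = int j0 - int e"
        by (rule mod_helper[OF eq[symmetric] of_nat_0_le_iff lt1 eq2 r0 lt2])
      then show ?thesis by simp
    next
      case False
      hence "k = q" using ke by simp
      hence "int z - int (m + b) = int j0 - int e" using eq2 by simp
      hence "Q * int a + int j = int j0 - int e" using eq by simp
      moreover have "0 \<le> Q * int a" using Q by simp
      ultimately show ?thesis by linarith
    qed
  qed
  have finJ: "finite (Jset a b m M)" by (rule finite_subset[of _ "{..<a}"]) (auto simp: Jset_def)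
  have MaxJ: "Max (Jset a b m M) = j0" using J0 Jle finJ by (intro Max_eqI) auto
  have xW: "x \<in> wagon a b m M"
    unfolding wagon_def MaxJ using xM xeq by blast
  have finW: "finite (wagon a b m M)" using finM by (rule finite_subset[rotated]) (auto simp: wagon_def)
  have MaxW: "Max (wagon a b m M) = x"
    using xW finW by (intro Max_eqI) (auto simp: wagon_def memM)
  have piv: "is_pivot a b m M x" unfolding is_pivot_def using xM J0 MaxW by auto
  have shad: "shadow a b m M = {m..m+q*b}"
  proof (intro equalityI subsetI)
    fix z assume "z \<in> shadow a b m M"
    hence z: "z \<in> M" "z < m + a + b" unfolding shadow_def by auto
    obtain k e where ke: "k \<le> q" "e \<le> k*b" "x - z = k*a + e" "m \<le> z" "z \<le> x"
      using Mdesc[OF z(1)] by blast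
    have "k = q"
    proof (rule ccontr)
      assume "k \<noteq> q"
      hence "k*(a+b) \<le> (q-1)*(a+b)" using ke(1) by (intro mult_le_mono1) simp
      moreover have "(q-1)*(a+b) + (a+b) = q*(a+b)" using assms(4) by (cases q) auto
      moreover have "x - z \<le> k*(a+b)" using ke(2,3) by (simp add: add_mult_distrib2)
      ultimately show False using ke(4,5) z(2) xm by linarith
    qed
    then show "z \<in> {m..m+q*b}" using ke by (simp add: x_def)
  next
    fix z assume z: "z \<in> {m..m+q*b}"
    have "x - z \<in> S" unfolding S_def nsg_iff using z
      by (intro exI[of _ q]) (auto simp: x_def algebra_simps)
    hence "z \<in> M" using z memM by (auto simp: x_def)
    moreover have "z < m + a + b" using z assms by auto
    ultimately show "z \<in> shadow a b m M" using z unfolding shadow_def by auto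
  qed
  have vac: False if s: "s \<in> S - M" and am2: "amenable S m (card M + 1) (M \<union> {s})"
      and sh: "shadow a b m (M \<union> {s}) = shadow a b m M" for s
  proof -
    from am2 have fin2: "finite (M \<union> {s})" and Min2: "Min (M \<union> {s}) = m"
      and cl: "\<forall>y\<in>M \<union> {s}. Dset S y \<inter> {m..} \<subseteq> M \<union> {s}" unfolding amenable_def by auto
    have sm: "m \<le> s" using Min2 fin2 by (metis Min_le UnI2 singletonI)
    have "s \<notin> {m..<m+a+b}"
    proof
      assume "s \<in> {m..<m+a+b}"
      hence "s \<in> shadow a b m (M \<union> {s})" unfolding shadow_def by auto
      hence "s \<in> M" using sh unfolding shadow_def by auto
      with s show False by auto
    qed
    hence sab: "m + a + b \<le> s" using sm by auto
    have aS: "a \<in> S" "a + b \<in> S" unfolding S_def nsg_iff by (auto intro!: exI[of _ 1])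
    have d1: "s - (s - a) = a" "s - (s - a - b) = a + b" using sab by arith+
    have "s - a \<in> Dset S s" unfolding Dset_def using cS[of "s-a"] sab aS(1) d1(1) by simp
    hence "s - a \<in> M \<union> {s}" using cl sab by auto
    moreover have "s - a \<noteq> s" using sab assms(2) by arith
    ultimately have "s - a \<in> M" by blast
    have "s - a - b \<in> Dset S s" unfolding Dset_def using cS[of "s-a-b"] sab aS(2) d1(2) by simp
    hence "s - a - b \<in> M \<union> {s}" using cl sab by auto
    moreover have "s - a - b \<noteq> s" using sab assms(2) by arith
    ultimately have "s - a - b \<in> M" by blast
    define u where "u = x - (s - a)"
    have u: "u \<in> S" "s - a \<le> x" using \<open>s - a \<in> M\<close> memM by (auto simp: u_def)
    have ub2: "u + b = x - (s - a - b)" using u(2) sab unfolding u_def by arith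
    have ub: "u + b \<in> S" using \<open>s - a - b \<in> M\<close> memM ub2 by simp
    have ubq: "u + b \<le> q*(a+b)" using ub2 xm sab by arith
    obtain k where k: "k*a \<le> u" "u \<le> k*(a+b)" using u unfolding S_def nsg_iff by auto
    obtain k' where k': "k'*a \<le> u + b" "u + b \<le> k'*(a+b)" using ub unfolding S_def nsg_iff by auto
    have k'q: "k' \<le> q" using k_le_q[OF k'(1) ubq assms(5)] .
    have "k \<noteq> 0"
    proof
      assume "k = 0"
      hence "u = 0" using k by simp
      hence "b \<in> S" using ub by simp
      then obtain l where "l*a \<le> b" "b \<le> l*(a+b)" unfolding S_def nsg_iff by auto
      then show False using assms(1,2) by (cases l) auto
    qed
    then obtain k0 where k0: "k = Suc k0" by (cases k) auto
    have id1: "k*(a+b) = k*a + k*b" "Suc k * a = k*a + a" "Suc k * b = k*b + b"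
      "k*a = k0*a + a" "k*(a+b) = k0*(a+b) + a + b" using k0 by (simp_all add: algebra_simps)
    have "u + b \<le> k*(a+b)"
    proof (rule ccontr)
      assume A: "\<not> ?thesis"
      have "k < k'"
      proof (rule ccontr)
        assume "\<not> k < k'"
        hence "k'*(a+b) \<le> k*(a+b)" by (intro mult_le_mono1) simp
        then show False using A k' by linarith
      qed
      hence "Suc k * a \<le> k' * a" by (intro mult_le_mono1) simp
      moreover have "Suc k * b \<le> q * b" using \<open>k < k'\<close> k'q by (intro mult_le_mono1) simp
      ultimately show False using k' k assms(5) id1 by linarith
    qed
    hence ua: "k0*a \<le> u - a" "u - a \<le> k0*(a+b)" "a \<le> u" using k id1 by linarith+
    hence "u - a \<in> S" unfolding S_def nsg_iff by blast
    moreover have "u - a = x - s" "s \<le> x" using u(2) ua(3) sab unfolding u_def by arith+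
    ultimately have "s \<in> M" using memM sm by auto
    with s show False by auto
  qed
  have t: "\<exists>t<a + b - 1. shadow a b m M = {m..m + t}"
    using shad assms by (intro exI[of _ "q*b"]) auto
  have v: "\<forall>s\<in>S - M. amenable S m (card M + 1) (M \<union> {s}) \<and>
        shadow a b m (M \<union> {s}) = shadow a b m M \<longrightarrow> s = x + a"
    using vac by blast
  have "ordered_amenable a b m (card M) M"
    unfolding ordered_amenable_def S_def[symmetric]
    apply (rule conjI[OF am])
    apply (rule exI[of _ x])
    using piv t v by (intro conjI)
  then show ?thesis by (simp only: M_def x_def S_def)
qed

end
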